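(* Let $k$ be a number field and let $u_1,u_2,u_3\in k$ be such that $0,u_1,u_2,u_3$ are pairwise distinct. Then there are infinitely many general Huff curves $$G_{a,b}:\ x(ay^2-1)=y(bx^2-1),\qquad a,b\in k,\ ab(a-b)\neq0,$$ such that each of $0,u_1,u_2,u_3$ is the $x$-coordinate of a point of $G_{a,b}(k)$. *)

theory Defs
  imports Complex_Main
begin

text \<open>A number field, realised (up to isomorphism) as a subfield of the complex
numbers that is finite-dimensional as a vector space over the rationals.\<close>
definition number_field :: "complex set \<Rightarrow> bool" where
  "number_field K \<longleftrightarrow>
     0 \<in> K \<and> 1 \<in> K \<and>
     (\<forall>x\<in>K. \<forall>y\<in>K. x + y \<in> K \<and> x * y \<in> K) \<and>
     (\<forall>x\<in>K. - x \<in> K) \<and>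
     (\<forall>x\<in>K. x \<noteq> 0 \<longrightarrow> inverse x \<in> K) \<and>
     (\<exists>B. finite B \<and> B \<subseteq> K \<and>
        (\<forall>x\<in>K. \<exists>c :: complex \<Rightarrow> rat. x = (\<Sum>b\<in>B. of_rat (c b) * b)))"

definition on_huff :: "complex \<Rightarrow> complex \<Rightarrow> complex \<Rightarrow> complex \<Rightarrow> bool" where
  "on_huff a b x y \<longleftrightarrow> x * (a * y^2 - 1) = y * (b * x^2 - 1)"

end

theory Submission
  imports Defs "HOL-Computational_Algebra.Polynomial"
begin

lemma ident:
  fixes u u1 u2 u3 t :: complex
  shows "u*((u1+u2+u3) - t*(u1*u2*u3))*(u - t*(u1*u2*u3))^2 - u*((u1+u2+u3)*t^2*(u1*u2*u3) - t^3*(u1*u2*u3)^2 + 1 - t*(u1*u2+u1*u3+u2*u3))*(u1*u2*u3)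
   - (u - t*(u1*u2*u3))*(((u1+u2+u3) - 2*t*(u1*u2*u3))*u^2 - (u1*u2*u3))
   = t*(u1*u2*u3) * ((u-u1)*(u-u2)*(u-u3))"
  by algebra

lemma huff_from:
  fixes u E D w e1 e3 t b :: complex
  assumes "e3 \<noteq> 0" "D \<noteq> 0" "e1 = E * e3" "b = E - 2*t"
    and "u*(e1 - t*e3)*w^2 - u*D*e3 - w*((e1 - 2*t*e3)*u^2 - e3) = 0"
  shows "on_huff ((E - t)*D) b u (w/D)"
proof -
  have "u*(e1 - t*e3)*w^2 - u*D*e3 - w*((e1 - 2*t*e3)*u^2 - e3)
      = e3 * D * (u*((E - t)*D*(w/D)^2 - 1) - (w/D)*(b*u^2 - 1))"
    using assms(1-3) unfolding assms(4) by (simp add: field_simps power2_eq_square)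
  with assms(5) assms(1,2) show ?thesis unfolding on_huff_def by simp
qed

lemma nf_closed:
  assumes "number_field K"
  shows "0 \<in> K" "1 \<in> K" "x \<in> K \<Longrightarrow> y \<in> K \<Longrightarrow> x + y \<in> K"
    "x \<in> K \<Longrightarrow> y \<in> K \<Longrightarrow> x * y \<in> K" "x \<in> K \<Longrightarrow> -x \<in> K"
    "x \<in> K \<Longrightarrow> inverse x \<in> K"
  using assms unfolding number_field_def by (auto simp del: inverse_eq_divide)

lemma nf_diff: "number_field K \<Longrightarrow> x \<in> K \<Longrightarrow> y \<in> K \<Longrightarrow> x - y \<in> K"
  using nf_closed[of K] by (metis diff_conv_add_uminus)

lemma nf_div: "number_field K \<Longrightarrow> x \<in> K \<Longrightarrow> y \<in> K \<Longrightarrow> x / y \<in> K"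
  using nf_closed[of K] by (metis divide_inverse inverse_zero)

lemma nf_pow: "number_field K \<Longrightarrow> x \<in> K \<Longrightarrow> x ^ n \<in> K"
  using nf_closed[of K] by (induction n) auto

lemma nf_nat: "number_field K \<Longrightarrow> of_nat n \<in> K"
  using nf_closed[of K] by (induction n) auto

theorem theorem4:
  fixes K :: "complex set" and u1 u2 u3 :: complex
  assumes "number_field K"
    and "u1 \<in> K" "u2 \<in> K" "u3 \<in> K"
    and "distinct [0, u1, u2, u3]"
  shows "infinite {(a, b). a \<in> K \<and> b \<in> K \<and> a * b * (a - b) \<noteq> 0 \<and>
           (\<forall>u \<in> {0, u1, u2, u3}. \<exists>y \<in> K. on_huff a b u y)}"
proof
  assume fin: "finite {(a, b). a \<in> K \<and> b \<in> K \<and> a * b * (a - b) \<noteq> 0 \<and>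
           (\<forall>u \<in> {0, u1, u2, u3}. \<exists>y \<in> K. on_huff a b u y)}" (is "finite ?S")
  note nf = assms(1)
  define e1 where "e1 = u1+u2+u3"
  define e2 where "e2 = u1*u2+u1*u3+u2*u3"
  define e3 where "e3 = u1*u2*u3"
  define E where "E = e1/e3"
  have e3: "e3 \<noteq> 0" using assms(5) unfolding e3_def by auto
  have e1E: "e1 = E * e3" using e3 unfolding E_def by simp
  have K: "e1 \<in> K" "e2 \<in> K" "e3 \<in> K" "E \<in> K"
    using assms(2-4) nf_closed[OF nf] nf_div[OF nf] unfolding e1_def e2_def e3_def E_def
    by (meson nf_closed(3,4)[OF nf])+
  define Dp where "Dp = [:1, -e2, e1*e3, -(e3^2):]"
  define Ap where "Ap = [:E, -1:] * Dp"
  define Bp where "Bp = [:E, -2:]"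
  have D_eq: "poly Dp t = e1*t^2*e3 - t^3*e3^2 + 1 - t*e2" for t
    unfolding Dp_def by (simp add: algebra_simps power2_eq_square power3_eq_cube)
  have Dp0: "Dp \<noteq> 0" unfolding Dp_def by simp
  have degD: "degree Dp = 3" unfolding Dp_def using e3 by simp
  have L0: "[:E, -1:] \<noteq> 0" by simp
  have Ap0: "Ap \<noteq> 0" unfolding Ap_def using Dp0 L0 by (metis mult_eq_0_iff)
  have degA: "degree Ap = 4" unfolding Ap_def using degree_mult_eq[OF L0 Dp0] degD by simp
  have Bp0: "Bp \<noteq> 0" unfolding Bp_def by simp
  have degB: "degree Bp \<le> 1" unfolding Bp_def by simp
  have ABp0: "Ap - Bp \<noteq> 0" using degA degB by auto
  define Bad where "Bad = {t. poly Dp t = 0} \<union> {t. poly Ap t = 0} \<union> {t. poly Bp t = 0}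
      \<union> {t. poly (Ap - Bp) t = 0}"
  have finBad: "finite Bad" unfolding Bad_def
    using poly_roots_finite Dp0 Ap0 Bp0 ABp0 by blast
  define T where "T = range (of_nat :: nat \<Rightarrow> complex) - Bad"
  have infT: "infinite T"
  proof
    assume "finite T"
    then have "finite (range (of_nat :: nat \<Rightarrow> complex))"
      using finBad unfolding T_def by (metis Diff_empty Diff_infinite_finite finite_Diff2)
    moreover have "inj (of_nat :: nat \<Rightarrow> complex)" by (simp add: inj_on_def)
    ultimately show False using finite_imageD by blast
  qed
  define f where "f t = (poly Ap t, poly Bp t)" for t
  have injf: "inj_on f T" unfolding f_def Bp_def inj_on_def by auto
  have sub: "f ` T \<subseteq> ?S"
  proof
    fix p assume "p \<in> f ` T"
    then obtain t where tT: "t \<in> T" and p: "p = f t" by auto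
    from tT obtain n where tn: "t = of_nat n" and nb: "t \<notin> Bad" unfolding T_def by auto
    have tK: "t \<in> K" using nf_nat[OF nf] tn by simp
    have D0: "poly Dp t \<noteq> 0" "poly Ap t \<noteq> 0" "poly Bp t \<noteq> 0" "poly Ap t - poly Bp t \<noteq> 0"
      using nb unfolding Bad_def by auto
    note cl = nf_closed(3,4)[OF nf] nf_diff[OF nf] nf_pow[OF nf] nf_closed(2)[OF nf]
    have DK: "poly Dp t \<in> K" unfolding D_eq
      by (intro cl K tK)
    have Aeq: "poly Ap t = (E - t) * poly Dp t" unfolding Ap_def by (simp add: algebra_simps)
    have Beq: "poly Bp t = E - 2*t" unfolding Bp_def by simp
    have AK: "poly Ap t \<in> K" unfolding Aeq by (intro cl K tK DK)
    have two: "2 * t \<in> K" using nf_closed(3)[OF nf tK tK] by (simp only: mult_2)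
    have BK: "poly Bp t \<in> K" unfolding Beq by (intro cl K two)
    have onh: "\<exists>y\<in>K. on_huff (poly Ap t) (poly Bp t) u y" if u: "u \<in> {0, u1, u2, u3}" for u
    proof (cases "u = 0")
      case True
      then show ?thesis using nf_closed(1)[OF nf] unfolding on_huff_def by auto
    next
      case False
      with u have uK: "u \<in> K" and pr: "(u-u1)*(u-u2)*(u-u3) = 0"
        using assms(2-4) by auto
      define w where "w = u - t*e3"
      have wK: "w \<in> K" unfolding w_def by (intro cl uK tK K)
      have "u*(e1 - t*e3)*w^2 - u*poly Dp t*e3 - w*((e1 - 2*t*e3)*u^2 - e3) = 0"
        using ident[of u u1 u2 u3 t] pr unfolding w_def D_eq e1_def e2_def e3_def by simp
      then have "on_huff ((E - t)*poly Dp t) (E - 2*t) u (w/poly Dp t)"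
        using huff_from[OF e3 D0(1) e1E refl] by simp
      moreover have "w / poly Dp t \<in> K" using nf_div[OF nf wK DK] .
      ultimately show ?thesis unfolding Aeq Beq by blast
    qed
    show "p \<in> ?S" unfolding p f_def using AK BK D0 onh by auto
  qed
  have "finite (f ` T)" using finite_subset[OF sub fin] .
  then have "finite T" using finite_imageD injf by blast
  with infT show False by simp
qed

end
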